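(* Let $G$ be a semi-simple group (i.e. $G$ has no nontrivial normal abelian subgroup) with $|\mathcal{C}(G)|=n$ for some positive integer $n$. Then $G$ is finite and $|G|\le (n-1)!$.
   Context: For a group $G$, $\mathcal{C}(G)=\{C_G(x) : x\in G\}$ denotes the set of centralizers of elements of $G$, where $C_G(x)=\{g\in G: gx=xg\}$. The group $G$ is not assumed finite a priori. *)

theory Defs
  imports "HOL-Algebra.Algebra"
begin

definition centralizer :: "('a, 'b) monoid_scheme \<Rightarrow> 'a \<Rightarrow> 'a set" where
  "centralizer G x = {g \<in> carrier G. g \<otimes>\<^bsub>G\<^esub> x = x \<otimes>\<^bsub>G\<^esub> g}"

definition centralizers :: "('a, 'b) monoid_scheme \<Rightarrow> 'a set set" where
  "centralizers G = centralizer G ` carrier G"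

definition semisimple_group :: "('a, 'b) monoid_scheme \<Rightarrow> bool" where
  "semisimple_group G \<longleftrightarrow>
     (\<forall>N. N \<lhd> G \<and> (\<forall>x\<in>N. \<forall>y\<in>N. x \<otimes>\<^bsub>G\<^esub> y = y \<otimes>\<^bsub>G\<^esub> x) \<longrightarrow> N = {\<one>\<^bsub>G\<^esub>})"

end

theory Submission
  imports Defs "HOL-Combinatorics.Permutations"
begin

context group
begin

lemma inv_cancel_left' [simp]: "g \<in> carrier G \<Longrightarrow> w \<in> carrier G \<Longrightarrow> inv g \<otimes> (g \<otimes> w) = w"
  by (simp flip: m_assoc)

lemma inv_cancel_left'' [simp]: "g \<in> carrier G \<Longrightarrow> w \<in> carrier G \<Longrightarrow> g \<otimes> (inv g \<otimes> w) = w"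
  by (simp flip: m_assoc)

lemma comm_inv: "x\<in>carrier G \<Longrightarrow> y\<in>carrier G \<Longrightarrow> x \<otimes> y = y \<otimes> x \<Longrightarrow> x \<otimes> inv y = inv y \<otimes> x"
proof -
  assume x: "x\<in>carrier G" and y: "y\<in>carrier G" and e: "x \<otimes> y = y \<otimes> x"
  have "x \<otimes> inv y = inv y \<otimes> ((y \<otimes> x) \<otimes> inv y)" using x y by (simp add: m_assoc)
  also have "\<dots> = inv y \<otimes> ((x \<otimes> y) \<otimes> inv y)" by (simp only: e)
  also have "\<dots> = inv y \<otimes> x" using x y by (simp add: m_assoc)
  finally show ?thesis .
qed

lemma comm_mult: "x\<in>carrier G \<Longrightarrow> y\<in>carrier G \<Longrightarrow> z\<in>carrier G \<Longrightarrow> x \<otimes> y = y \<otimes> x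
  \<Longrightarrow> x \<otimes> z = z \<otimes> x \<Longrightarrow> x \<otimes> (y \<otimes> z) = (y \<otimes> z) \<otimes> x"
proof -
  assume x: "x\<in>carrier G" and y: "y\<in>carrier G" and z: "z\<in>carrier G"
    and e1: "x \<otimes> y = y \<otimes> x" and e2: "x \<otimes> z = z \<otimes> x"
  have "x \<otimes> (y \<otimes> z) = (x \<otimes> y) \<otimes> z" using x y z by (simp add: m_assoc)
  also have "\<dots> = y \<otimes> (x \<otimes> z)" using x y z by (simp only: e1 m_assoc)
  also have "\<dots> = y \<otimes> (z \<otimes> x)" by (simp only: e2)
  also have "\<dots> = (y \<otimes> z) \<otimes> x" using x y z by (simp add: m_assoc)
  finally show ?thesis .
qed

lemma comm_conj: "x\<in>carrier G \<Longrightarrow> y\<in>carrier G \<Longrightarrow> g\<in>carrier G \<Longrightarrow> x \<otimes> y = y \<otimes> x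
  \<Longrightarrow> (g\<otimes>x\<otimes>inv g) \<otimes> (g\<otimes>y\<otimes>inv g) = (g\<otimes>y\<otimes>inv g) \<otimes> (g\<otimes>x\<otimes>inv g)"
proof -
  assume x: "x\<in>carrier G" and y: "y\<in>carrier G" and g: "g\<in>carrier G" and e: "x \<otimes> y = y \<otimes> x"
  have "(g\<otimes>x\<otimes>inv g) \<otimes> (g\<otimes>y\<otimes>inv g) = g \<otimes> (x \<otimes> y) \<otimes> inv g" using x y g by (simp add: m_assoc)
  also have "\<dots> = g \<otimes> (y \<otimes> x) \<otimes> inv g" by (simp only: e)
  also have "\<dots> = (g\<otimes>y\<otimes>inv g) \<otimes> (g\<otimes>x\<otimes>inv g)" using x y g by (simp add: m_assoc)
  finally show ?thesis .
qed

lemma engel: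
  assumes a: "a \<in> carrier G"
    and H: "\<And>y. y \<in> carrier G \<Longrightarrow> y \<otimes> (inv a \<otimes> y \<otimes> a) = (inv a \<otimes> y \<otimes> a) \<otimes> y"
    and g: "g \<in> carrier G"
  shows "a \<otimes> (inv g \<otimes> a \<otimes> g) = (inv g \<otimes> a \<otimes> g) \<otimes> a"
proof -
  have Q: "y \<otimes> (inv y \<otimes> (inv a \<otimes> y \<otimes> a)) = (inv y \<otimes> (inv a \<otimes> y \<otimes> a)) \<otimes> y"
    if y: "y \<in> carrier G" for y
    by (rule comm_mult) (use y a H[OF y] in auto)
  define c where "c = inv g \<otimes> (inv a \<otimes> g \<otimes> a)"
  have c: "c \<in> carrier G" using a g by (simp add: c_def)
  have gc: "g \<otimes> c = c \<otimes> g" using Q[OF g] by (simp add: c_def)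
  have X: "inv (g \<otimes> a) \<otimes> (inv a \<otimes> (g \<otimes> a) \<otimes> a) = inv a \<otimes> c \<otimes> a"
    using a g by (simp add: c_def m_assoc inv_mult_group)
  have E: "(g \<otimes> a) \<otimes> (inv a \<otimes> c \<otimes> a) = (inv a \<otimes> c \<otimes> a) \<otimes> (g \<otimes> a)"
    using Q[of "g \<otimes> a", unfolded X] a g by blast
  have "(g \<otimes> a) \<otimes> (inv a \<otimes> c \<otimes> a) = (g \<otimes> c) \<otimes> a"
    using a g c by (simp add: m_assoc)
  also have "\<dots> = c \<otimes> (g \<otimes> a)" using gc a g c by (simp add: m_assoc)
  finally have F: "(g \<otimes> a) \<otimes> (inv a \<otimes> c \<otimes> a) = c \<otimes> (g \<otimes> a)" .
  have "c \<otimes> (g \<otimes> a) = (inv a \<otimes> c \<otimes> a) \<otimes> (g \<otimes> a)" using trans[OF sym[OF F] E] .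
  then have cc: "c = inv a \<otimes> c \<otimes> a"
    using right_cancel[of "g \<otimes> a" c "inv a \<otimes> c \<otimes> a"] a g c by (simp only: m_closed inv_closed)
  have ac: "a \<otimes> c = c \<otimes> a"
  proof -
    have "a \<otimes> c = a \<otimes> (inv a \<otimes> c \<otimes> a)" using cc by (rule arg_cong)
    also have "\<dots> = c \<otimes> a" using a c by (simp add: m_assoc)
    finally show ?thesis .
  qed
  have "c \<otimes> inv a = inv g \<otimes> inv a \<otimes> g" using a g by (simp add: c_def m_assoc)
  moreover have "a \<otimes> (c \<otimes> inv a) = (c \<otimes> inv a) \<otimes> a"
    by (rule comm_mult) (use a c ac in auto)
  ultimately have "a \<otimes> inv (inv g \<otimes> inv a \<otimes> g) = inv (inv g \<otimes> inv a \<otimes> g) \<otimes> a"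
    using a g by (intro comm_inv) auto
  then show ?thesis using a g by (simp add: inv_mult_group m_assoc)
qed


lemma centralizer_conj:
  assumes g: "g \<in> carrier G" and x: "x \<in> carrier G"
  shows "(\<lambda>y. g \<otimes> y \<otimes> inv g) ` centralizer G x = centralizer G (g \<otimes> x \<otimes> inv g)"
proof
  show "(\<lambda>y. g \<otimes> y \<otimes> inv g) ` centralizer G x \<subseteq> centralizer G (g \<otimes> x \<otimes> inv g)"
    using comm_conj[OF _ x g] g x unfolding centralizer_def by auto
next
  show "centralizer G (g \<otimes> x \<otimes> inv g) \<subseteq> (\<lambda>y. g \<otimes> y \<otimes> inv g) ` centralizer G x"
  proof
    fix z assume z: "z \<in> centralizer G (g \<otimes> x \<otimes> inv g)"
    then have zc: "z \<in> carrier G" and e: "z \<otimes> (g \<otimes> x \<otimes> inv g) = (g \<otimes> x \<otimes> inv g) \<otimes> z"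
      unfolding centralizer_def by auto
    have "(inv g \<otimes> z \<otimes> inv (inv g)) \<otimes> (inv g \<otimes> (g \<otimes> x \<otimes> inv g) \<otimes> inv (inv g))
        = (inv g \<otimes> (g \<otimes> x \<otimes> inv g) \<otimes> inv (inv g)) \<otimes> (inv g \<otimes> z \<otimes> inv (inv g))"
      using comm_conj[of z "g \<otimes> x \<otimes> inv g" "inv g"] e zc g x by simp
    then have "inv g \<otimes> z \<otimes> g \<in> centralizer G x"
      using g x zc unfolding centralizer_def by (simp add: m_assoc)
    moreover have "z = g \<otimes> (inv g \<otimes> z \<otimes> g) \<otimes> inv g" using g zc by (simp add: m_assoc)
    ultimately show "z \<in> (\<lambda>y. g \<otimes> y \<otimes> inv g) ` centralizer G x" by blast
  qed
qed

lemma centralizer_one: "centralizer G \<one> = carrier G"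
  unfolding centralizer_def by auto

lemma centralizer_sub: "centralizer G x \<subseteq> carrier G"
  unfolding centralizer_def by auto

lemma conj_comp:
  assumes "C \<subseteq> carrier G" "g \<in> carrier G" "h \<in> carrier G"
  shows "(\<lambda>y. h \<otimes> y \<otimes> inv h) ` ((\<lambda>y. g \<otimes> y \<otimes> inv g) ` C) = (\<lambda>y. (h \<otimes> g) \<otimes> y \<otimes> inv (h \<otimes> g)) ` C"
  unfolding image_image
  by (rule image_cong) (use assms in \<open>auto simp: m_assoc inv_mult_group\<close>)

lemma kernel_trivial:
  assumes ss: "semisimple_group G" and a: "a \<in> carrier G"
    and K: "\<And>x. x \<in> carrier G \<Longrightarrow> centralizer G (a \<otimes> x \<otimes> inv a) = centralizer G x"
  shows "a = \<one>"
proof -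
  have H: "y \<otimes> (inv a \<otimes> y \<otimes> a) = (inv a \<otimes> y \<otimes> a) \<otimes> y" if y: "y \<in> carrier G" for y
  proof -
    have w: "inv a \<otimes> y \<otimes> a \<in> carrier G" using a y by simp
    have "a \<otimes> (inv a \<otimes> y \<otimes> a) \<otimes> inv a = y" using a y by (simp add: m_assoc)
    then have e: "centralizer G y = centralizer G (inv a \<otimes> y \<otimes> a)" using K[OF w] by simp
    have "inv a \<otimes> y \<otimes> a \<in> centralizer G (inv a \<otimes> y \<otimes> a)"
      using w unfolding centralizer_def by simp
    then have "inv a \<otimes> y \<otimes> a \<in> centralizer G y" by (simp only: e)
    then have "(inv a \<otimes> y \<otimes> a) \<otimes> y = y \<otimes> (inv a \<otimes> y \<otimes> a)" unfolding centralizer_def by blast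
    then show ?thesis by (rule sym)
  qed
  have R: "a \<otimes> (inv g \<otimes> a \<otimes> g) = (inv g \<otimes> a \<otimes> g) \<otimes> a" if "g \<in> carrier G" for g
    using engel[OF a H that] .
  define Cs where "Cs = {z \<in> carrier G. \<forall>g\<in>carrier G. z \<otimes> (g \<otimes> a \<otimes> inv g) = (g \<otimes> a \<otimes> inv g) \<otimes> z}"
  define Z where "Z = {y \<in> Cs. \<forall>z\<in>Cs. y \<otimes> z = z \<otimes> y}"
  have Cs_conj: "h \<otimes> z \<otimes> inv h \<in> Cs" if z: "z \<in> Cs" and h: "h \<in> carrier G" for z h
  proof -
    have zc: "z \<in> carrier G" using z Cs_def by auto
    have "(h \<otimes> z \<otimes> inv h) \<otimes> (g \<otimes> a \<otimes> inv g) = (g \<otimes> a \<otimes> inv g) \<otimes> (h \<otimes> z \<otimes> inv h)"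
      if g: "g \<in> carrier G" for g
    proof -
      have "z \<otimes> ((inv h \<otimes> g) \<otimes> a \<otimes> inv (inv h \<otimes> g)) = ((inv h \<otimes> g) \<otimes> a \<otimes> inv (inv h \<otimes> g)) \<otimes> z"
        using z g h unfolding Cs_def by auto
      from comm_conj[OF zc _ h this] show ?thesis
        using a g h zc by (simp add: m_assoc inv_mult_group)
    qed
    then show ?thesis unfolding Cs_def using zc h by auto
  qed
  have aCs: "a \<in> Cs" unfolding Cs_def
  proof (safe intro!: a)
    fix g assume g: "g \<in> carrier G"
    have "a \<otimes> (inv (inv g) \<otimes> a \<otimes> inv g) = (inv (inv g) \<otimes> a \<otimes> inv g) \<otimes> a"
      using R[of "inv g"] g by simp
    then show "a \<otimes> (g \<otimes> a \<otimes> inv g) = g \<otimes> a \<otimes> inv g \<otimes> a" using g by simp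
  qed
  have aZ: "a \<in> Z" unfolding Z_def
  proof (safe intro!: aCs)
    fix z assume "z \<in> Cs"
    then have "z \<otimes> (\<one> \<otimes> a \<otimes> inv \<one>) = (\<one> \<otimes> a \<otimes> inv \<one>) \<otimes> z" "z \<in> carrier G"
      unfolding Cs_def using a one_closed by blast+
    then have "z \<otimes> a = a \<otimes> z" using a by simp
    then show "a \<otimes> z = z \<otimes> a" by (rule sym)
  qed
  have Cs_inv: "inv z \<in> Cs" if z: "z \<in> Cs" for z
  proof -
    have zc: "z \<in> carrier G" using z Cs_def by auto
    have "inv z \<otimes> (g \<otimes> a \<otimes> inv g) = (g \<otimes> a \<otimes> inv g) \<otimes> inv z" if g: "g \<in> carrier G" for g
    proof -
      have "z \<otimes> (g \<otimes> a \<otimes> inv g) = (g \<otimes> a \<otimes> inv g) \<otimes> z" using z g unfolding Cs_def by auto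
      then have "(g \<otimes> a \<otimes> inv g) \<otimes> inv z = inv z \<otimes> (g \<otimes> a \<otimes> inv g)"
        using comm_inv[of "g \<otimes> a \<otimes> inv g" z] a g zc by simp
      then show ?thesis by simp
    qed
    then show ?thesis unfolding Cs_def using zc by auto
  qed
  have Cs_mult: "z \<otimes> w \<in> Cs" if z: "z \<in> Cs" and w: "w \<in> Cs" for z w
  proof -
    have zc: "z \<in> carrier G" "w \<in> carrier G" using z w Cs_def by auto
    have "(z \<otimes> w) \<otimes> (g \<otimes> a \<otimes> inv g) = (g \<otimes> a \<otimes> inv g) \<otimes> (z \<otimes> w)" if g: "g \<in> carrier G" for g
    proof -
      have "z \<otimes> (g \<otimes> a \<otimes> inv g) = (g \<otimes> a \<otimes> inv g) \<otimes> z" "w \<otimes> (g \<otimes> a \<otimes> inv g) = (g \<otimes> a \<otimes> inv g) \<otimes> w"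
        using z w g unfolding Cs_def by auto
      then have "(g \<otimes> a \<otimes> inv g) \<otimes> (z \<otimes> w) = (z \<otimes> w) \<otimes> (g \<otimes> a \<otimes> inv g)"
        using comm_mult[of "g \<otimes> a \<otimes> inv g" z w] a g zc by simp
      then show ?thesis by simp
    qed
    then show ?thesis unfolding Cs_def using zc by auto
  qed
  have CsC: "z \<in> carrier G" if "z \<in> Cs" for z using that unfolding Cs_def by blast
  have ZCs: "y \<in> Cs" if "y \<in> Z" for y using that unfolding Z_def by blast
  have ZD: "y \<otimes> z = z \<otimes> y" if "y \<in> Z" "z \<in> Cs" for y z using that unfolding Z_def by blast
  have ZI: "y \<in> Z" if "y \<in> Cs" "\<And>z. z \<in> Cs \<Longrightarrow> y \<otimes> z = z \<otimes> y" for y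
    using that unfolding Z_def by blast
  have sub: "subgroup Z G"
  proof (rule subgroupI)
    show "Z \<subseteq> carrier G" using ZCs CsC by blast
    show "Z \<noteq> {}" using aZ by auto
  next
    fix y assume y: "y \<in> Z"
    then have yc: "y \<in> carrier G" using ZCs CsC by blast
    show "inv y \<in> Z"
    proof (rule ZI)
      show "inv y \<in> Cs" using y Cs_inv ZCs by blast
      fix z assume z: "z \<in> Cs"
      have "z \<otimes> y = y \<otimes> z" using ZD[OF y z] by (rule sym)
      then show "inv y \<otimes> z = z \<otimes> inv y" using comm_inv[of z y] yc CsC[OF z] by simp
    qed
  next
    fix y w assume y: "y \<in> Z" and w: "w \<in> Z"
    show "y \<otimes> w \<in> Z"
    proof (rule ZI)
      show "y \<otimes> w \<in> Cs" using y w Cs_mult ZCs by blast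
      fix z assume z: "z \<in> Cs"
      have "z \<otimes> y = y \<otimes> z" using ZD[OF y z] by (rule sym)
      moreover have "z \<otimes> w = w \<otimes> z" using ZD[OF w z] by (rule sym)
      ultimately have "z \<otimes> (y \<otimes> w) = (y \<otimes> w) \<otimes> z"
        using comm_mult[of z y w] CsC[OF z] CsC[OF ZCs[OF y]] CsC[OF ZCs[OF w]] by blast
      then show "y \<otimes> w \<otimes> z = z \<otimes> (y \<otimes> w)" by (rule sym)
    qed
  qed
  have nor: "Z \<lhd> G" unfolding normal_inv_iff
  proof (intro conjI sub ballI)
    fix h y assume h: "h \<in> carrier G" and y: "y \<in> Z"
    have yc: "y \<in> carrier G" using y ZCs CsC by blast
    show "h \<otimes> y \<otimes> inv h \<in> Z"
    proof (rule ZI)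
      show "h \<otimes> y \<otimes> inv h \<in> Cs" using Cs_conj ZCs[OF y] h by blast
      fix z assume z: "z \<in> Cs"
      have z': "inv h \<otimes> z \<otimes> inv (inv h) \<in> Cs" using Cs_conj[OF z inv_closed[OF h]] .
      have zc: "z \<in> carrier G" using CsC[OF z] .
      have "y \<otimes> (inv h \<otimes> z \<otimes> inv (inv h)) = (inv h \<otimes> z \<otimes> inv (inv h)) \<otimes> y"
        using ZD[OF y z'] .
      from comm_conj[OF yc _ h this] have
        "(h \<otimes> y \<otimes> inv h) \<otimes> (h \<otimes> (inv h \<otimes> z \<otimes> inv (inv h)) \<otimes> inv h)
         = (h \<otimes> (inv h \<otimes> z \<otimes> inv (inv h)) \<otimes> inv h) \<otimes> (h \<otimes> y \<otimes> inv h)"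
        using h zc by simp
      moreover have "h \<otimes> (inv h \<otimes> z \<otimes> inv (inv h)) \<otimes> inv h = z" using h zc by (simp add: m_assoc)
      ultimately show "h \<otimes> y \<otimes> inv h \<otimes> z = z \<otimes> (h \<otimes> y \<otimes> inv h)" by simp
    qed
  qed
  have comm: "\<forall>x\<in>Z. \<forall>y\<in>Z. x \<otimes> y = y \<otimes> x" using ZD ZCs by blast
  have "Z \<lhd> G \<and> (\<forall>x\<in>Z. \<forall>y\<in>Z. x \<otimes> y = y \<otimes> x) \<longrightarrow> Z = {\<one>}"
    using ss unfolding semisimple_group_def by (rule spec)
  with nor comm have "Z = {\<one>}" by blast
  with aZ show ?thesis by simp
qed

lemma main_bound:
  assumes ss: "semisimple_group G" and fin: "finite (centralizers G)"
  shows "finite (carrier G) \<and> card (carrier G) \<le> fact (card (centralizers G) - 1)"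
proof -
  define S where "S = centralizers G - {carrier G}"
  define cj where "cj g C = (\<lambda>y. g \<otimes> y \<otimes> inv g) ` C" for g C
  define psi where "psi g = (\<lambda>C. if C \<in> S then cj g C else C)" for g
  have carrS: "carrier G \<in> centralizers G"
    using centralizer_one unfolding centralizers_def by (metis image_eqI one_closed)
  have finS: "finite S" using fin unfolding S_def by auto
  have cardS: "card S = card (centralizers G) - 1"
    unfolding S_def using carrS by (rule card_Diff_singleton)
  have cj_cent: "cj g (centralizer G x) = centralizer G (g \<otimes> x \<otimes> inv g)"
    if "g \<in> carrier G" "x \<in> carrier G" for g x
    unfolding cj_def using centralizer_conj[OF that] .
  have cj_carr: "cj g (carrier G) = carrier G" if g: "g \<in> carrier G" for g
    using cj_cent[OF g one_closed] g by (simp add: centralizer_one)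
  have cj_comp: "cj h (cj g C) = cj (h \<otimes> g) C"
    if "C \<subseteq> carrier G" "g \<in> carrier G" "h \<in> carrier G" for C g h
    unfolding cj_def using conj_comp[OF that] .
  have cj_one: "cj \<one> C = C" if "C \<subseteq> carrier G" for C
    unfolding cj_def using that by (auto simp: image_iff) (metis in_mono l_one r_one)
  have cjinv: "cj (inv g) (cj g C) = C" if "C \<subseteq> carrier G" "g \<in> carrier G" for C g
    using cj_comp[OF that inv_closed[OF that(2)]] cj_one[OF that(1)] that(2) by simp
  have Ssub: "C \<subseteq> carrier G" if "C \<in> S" for C
    using that centralizer_sub unfolding S_def centralizers_def by blast
  have cjS: "cj g C \<in> S" if g: "g \<in> carrier G" and C: "C \<in> S" for g C
  proof -
    obtain x where x: "x \<in> carrier G" and Cx: "C = centralizer G x"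
      using C unfolding S_def centralizers_def by blast
    have "cj g C \<in> centralizers G" using cj_cent[OF g x] Cx g x
      unfolding centralizers_def by simp
    moreover have "cj g C \<noteq> carrier G"
    proof
      assume "cj g C = carrier G"
      then have "cj (inv g) (cj g C) = carrier G" using cj_carr[OF inv_closed[OF g]] by simp
      then have "C = carrier G" using cjinv[OF Ssub[OF C] g] by simp
      then show False using C unfolding S_def by blast
    qed
    ultimately show ?thesis unfolding S_def by blast
  qed
  have perm: "psi g permutes S" if g: "g \<in> carrier G" for g
  proof (rule bij_imp_permutes)
    show "bij_betw (psi g) S S"
    proof (rule bij_betw_byWitness[where f' = "psi (inv g)"])
      show "\<forall>C\<in>S. psi (inv g) (psi g C) = C"
        using cjS g cjinv Ssub unfolding psi_def by simp
      show "\<forall>C\<in>S. psi g (psi (inv g) C) = C"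
      proof
        fix C assume C: "C \<in> S"
        have "cj g (cj (inv g) C) = C" using cjinv[OF Ssub[OF C] inv_closed[OF g]] g by simp
        then show "psi g (psi (inv g) C) = C" using C cjS[OF inv_closed[OF g] C] unfolding psi_def by simp
      qed
      show "psi g ` S \<subseteq> S" using cjS g unfolding psi_def by auto
      show "psi (inv g) ` S \<subseteq> S" using cjS g unfolding psi_def by auto
    qed
    show "psi g C = C" if "C \<notin> S" for C using that unfolding psi_def by simp
  qed
  have inj: "inj_on psi (carrier G)"
  proof (rule inj_onI)
    fix g h assume g: "g \<in> carrier G" and h: "h \<in> carrier G" and e: "psi g = psi h"
    define a where "a = inv h \<otimes> g"
    have a: "a \<in> carrier G" using g h by (simp add: a_def)
    have "centralizer G (a \<otimes> x \<otimes> inv a) = centralizer G x" if x: "x \<in> carrier G" for x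
    proof -
      let ?C = "centralizer G x"
      have "cj a ?C = ?C"
      proof (cases "?C \<in> S")
        case True
        have "cj g ?C = cj h ?C" using fun_cong[OF e, of ?C] True unfolding psi_def by simp
        then have "cj (inv h) (cj g ?C) = cj (inv h) (cj h ?C)" by simp
        then show ?thesis using cjinv[OF centralizer_sub h] cj_comp[OF centralizer_sub g inv_closed[OF h]]
          by (simp add: a_def)
      next
        case False
        have "?C \<in> centralizers G" using x unfolding centralizers_def by blast
        then have "?C = carrier G" using False unfolding S_def by blast
        then show ?thesis using cj_carr[OF a] by simp
      qed
      then show ?thesis using cj_cent[OF a x] by simp
    qed
    then have "a = \<one>" using kernel_trivial[OF ss a] by blast
    then show "g = h" using g h inv_solve_left'[of \<one> h g] unfolding a_def by simp
  qed
  have img: "psi ` carrier G \<subseteq> {p. p permutes S}" using perm by blast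
  have finP: "finite {p. p permutes S}" using finite_permutations[OF finS] .
  have "finite (carrier G)"
    using finite_imageD[OF finite_subset[OF img finP] inj] .
  moreover have "card (carrier G) \<le> card {p. p permutes S}"
    using card_inj_on_le[OF inj img finP] .
  ultimately show ?thesis using card_permutations[OF cardS finS] by simp
qed

end

theorem proposition2p5:
  fixes G :: "('a, 'b) monoid_scheme" and n :: nat
  assumes "group G"
    and "semisimple_group G"
    and "n > 0"
    and "finite (centralizers G)"
    and "card (centralizers G) = n"
  shows "finite (carrier G) \<and> card (carrier G) \<le> fact (n - 1)"
  using group.main_bound[OF assms(1,2,4)] assms(5) by simp

end
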